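(* Let $X \in \mathbb{R}^{n\times p}$ with columns $X_1,\dots,X_p \in \mathbb{R}^n$, let $y \in \mathbb{R}^n$, $\rho > 0$, and let $k$ be a positive integer. Consider the semidefinite program (SDP$_{DCL}$) \[ \min_{b \in \mathbb{R}^p,\ B \in \mathcal{S}^p,\ z \in \mathbb{R}^p} \ \frac{1}{2}\left\langle \begin{bmatrix} y^Ty & -y^TX \\ -X^Ty & \rho I_p + X^TX\end{bmatrix}, \begin{bmatrix} 1 & b^T \\ b & B\end{bmatrix}\right\rangle \] subject to $\begin{bmatrix} 1 & b^T \\ b & B\end{bmatrix} \succeq 0$, $\begin{bmatrix} z_i & b_i \\ b_i & B_{ii}\end{bmatrix} \succeq 0$ for all $i=1,\dots,p$, and $\sum_{i=1}^p z_i \le k$. Let $S \subseteq \{1,\dots,p\}$ with $|S| = k$, let $z^* \in \{0,1\}^p$ be given by $z^*_i = 1$ for $i \in S$ and $z^*_i = 0$ for $i \notin S$, and let \[ b^* \in \arg\min_{\beta \in \mathbb{R}^p}\left\{ \|X\beta - y\|_2^2 + \rho\|\beta\|_2^2 \ : \ \beta_j = 0 \ \forall j \notin S\right\}. \] Let $X_S$ be the $n\times |S|$ submatrix of $X$ consisting of the columns indexed by $S$, and $M := \left(I_n + \rho^{-1} X_S X_S^T\right)^{-1}$. Then $(b^*, b^* b^{*T}, z^* )$ is an optimal solution of (SDP$_{DCL}$) if and only if there exist a vector $\tilde d \in \mathbb{R}^p_+$ and a scalar $\tilde\lambda \in \mathbb{R}_+$ such that \[ \rho^{-1}X^TX + I_p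 - \mathbf{D}(\tilde d) \succeq 0, \] \[ \tilde\lambda = \tilde d_i \left(X_i^T M y\right)^2 \quad \forall i \in S, \] \[ \tilde\lambda \tilde d_i \ge \left(X_i^T M y\right)^2 \quad \forall i \notin S. \]
   Context: $\mathbf{D}(d)$ denotes the $p\times p$ diagonal matrix with diagonal entries $d_1,\dots,d_p$; $\mathcal{S}^p$ is the space of real symmetric $p\times p$ matrices; $\succeq 0$ denotes positive semidefiniteness; $\langle A, C\rangle = \mathrm{trace}(A^TC)$; $\mathbb{R}^p_+$ is the nonnegative orthant. *)

theory Defs
  imports "HOL-Analysis.Analysis"
begin

definition psd :: "real^'m^'m \<Rightarrow> bool" where
  "psd A \<longleftrightarrow> transpose A = A \<and> (\<forall>x. 0 \<le> x \<bullet> (A *v x))"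

definition symmetric_mat :: "real^'m^'m \<Rightarrow> bool" where
  "symmetric_mat A \<longleftrightarrow> transpose A = A"

definition diag_mat :: "real^'p \<Rightarrow> real^'p^'p" where
  "diag_mat d = (\<chi> i j. if i = j then d $ i else 0)"

definition tr_inner :: "real^'m^'m \<Rightarrow> real^'m^'m \<Rightarrow> real" where
  "tr_inner A C = trace (transpose A ** C)"

text \<open>The (p+1)x(p+1) block matrix [a, v^T; v, W]; the extra index is None.\<close>
definition block_mat :: "real \<Rightarrow> real^'p \<Rightarrow> real^'p^'p \<Rightarrow> real^('p option)^('p option)" where
  "block_mat a v W = (\<chi> i j. case i of
       None \<Rightarrow> (case j of None \<Rightarrow> a | Some j' \<Rightarrow> v $ j')
     | Some i' \<Rightarrow> (case j of None \<Rightarrow> v $ i' | Some j' \<Rightarrow> W $ i' $ j'))"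

definition mat22 :: "real \<Rightarrow> real \<Rightarrow> real \<Rightarrow> real \<Rightarrow> real^2^2" where
  "mat22 a b c d = vector [vector [a, b], vector [c, d]]"

definition sdp_cost :: "real^'p^'n \<Rightarrow> real^'n \<Rightarrow> real \<Rightarrow> real^('p option)^('p option)" where
  "sdp_cost X y \<rho> = block_mat (y \<bullet> y) (- (transpose X *v y)) (\<rho> *\<^sub>R mat 1 + transpose X ** X)"

definition sdp_obj :: "real^'p^'n \<Rightarrow> real^'n \<Rightarrow> real \<Rightarrow> real^'p \<Rightarrow> real^'p^'p \<Rightarrow> real" where
  "sdp_obj X y \<rho> b B = (1/2) * tr_inner (sdp_cost X y \<rho>) (block_mat 1 b B)"

definition sdp_feasible :: "nat \<Rightarrow> real^'p \<Rightarrow> real^'p^'p \<Rightarrow> real^'p \<Rightarrow> bool" where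
  "sdp_feasible k b B z \<longleftrightarrow>
     symmetric_mat B \<and> psd (block_mat 1 b B) \<and>
     (\<forall>i. psd (mat22 (z $ i) (b $ i) (b $ i) (B $ i $ i))) \<and>
     (\<Sum>i\<in>UNIV. z $ i) \<le> real k"

definition sdp_optimal :: "real^'p^'n \<Rightarrow> real^'n \<Rightarrow> real \<Rightarrow> nat \<Rightarrow> real^'p \<Rightarrow> real^'p^'p \<Rightarrow> real^'p \<Rightarrow> bool" where
  "sdp_optimal X y \<rho> k b B z \<longleftrightarrow> sdp_feasible k b B z \<and>
     (\<forall>b' B' z'. sdp_feasible k b' B' z' \<longrightarrow> sdp_obj X y \<rho> b B \<le> sdp_obj X y \<rho> b' B')"

definition outer :: "real^'p \<Rightarrow> real^'p \<Rightarrow> real^'p^'p" where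
  "outer u v = (\<chi> i j. u $ i * v $ j)"

definition ridge_obj :: "real^'p^'n \<Rightarrow> real^'n \<Rightarrow> real \<Rightarrow> real^'p \<Rightarrow> real" where
  "ridge_obj X y \<rho> \<beta> = (norm (X *v \<beta> - y))\<^sup>2 + \<rho> * (norm \<beta>)\<^sup>2"

definition is_restricted_ridge_min :: "real^'p^'n \<Rightarrow> real^'n \<Rightarrow> real \<Rightarrow> 'p set \<Rightarrow> real^'p \<Rightarrow> bool" where
  "is_restricted_ridge_min X y \<rho> S b \<longleftrightarrow> (\<forall>j. j \<notin> S \<longrightarrow> b $ j = 0) \<and>
     (\<forall>\<beta>. (\<forall>j. j \<notin> S \<longrightarrow> \<beta> $ j = 0) \<longrightarrow> ridge_obj X y \<rho> b \<le> ridge_obj X y \<rho> \<beta>)"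

text \<open>X_S X_S^T, where X_S is the column submatrix of X indexed by S.\<close>
definition XS_XSt :: "real^'p^'n \<Rightarrow> 'p set \<Rightarrow> real^'n^'n" where
  "XS_XSt X S = (\<chi> i l. \<Sum>j\<in>S. X $ i $ j * X $ l $ j)"

definition Mmat :: "real^'p^'n \<Rightarrow> real \<Rightarrow> 'p set \<Rightarrow> real^'n^'n" where
  "Mmat X \<rho> S = matrix_inv (mat 1 + inverse \<rho> *\<^sub>R XS_XSt X S)"

definition indicator_vec :: "'p set \<Rightarrow> real^'p" where
  "indicator_vec S = (\<chi> i. if i \<in> S then 1 else 0)"

end

theory Submission
  imports Defs
begin

lemma sum_delta_mult1[simp]: fixes f :: "'n::finite \<Rightarrow> real" shows "(\<Sum>j\<in>UNIV. f j * (if j = a then 1 else 0)) = (f a :: real)"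
proof -
  have "(\<Sum>j\<in>UNIV. f j * (if j = a then 1 else 0)) = (\<Sum>j\<in>UNIV. if j = a then f j else 0)" by (rule sum.cong) auto
  also have "\<dots> = f a" by simp
  finally show ?thesis .
qed
lemma sum_delta_mult2[simp]: fixes f :: "'n::finite \<Rightarrow> real" shows "(\<Sum>j\<in>UNIV. (if j = a then 1 else 0) * f j) = (f a :: real)"
proof -
  have "(\<Sum>j\<in>UNIV. (if j = a then 1 else 0) * f j) = (\<Sum>j\<in>UNIV. if j = a then f j else 0)" by (rule sum.cong) auto
  also have "\<dots> = f a" by simp
  finally show ?thesis .
qed
lemma ax1: "(W::real^'n^'n) *v axis a 1 = column a W"
  by (simp add: vec_eq_iff matrix_vector_mult_def axis_def column_def)
lemma ax2: "axis a 1 \<bullet> (x::real^'n) = x$a"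
  by (simp add: inner_axis')
lemma ax3: "(x::real^'n) \<bullet> axis a 1 = x$a"
  by (simp add: inner_axis)
lemma qf_sum: "(x::real^'n) \<bullet> (P *v x) = (\<Sum>i\<in>UNIV. \<Sum>j\<in>UNIV. x$i * P$i$j * x$j)"
  by (simp add: inner_vec_def matrix_vector_mult_def sum_distrib_left mult.assoc)
lemma inner_mat: "(A::real^'n^'m) \<bullet> B = (\<Sum>i\<in>UNIV. \<Sum>j\<in>UNIV. A$i$j * B$i$j)"
  by (simp add: inner_vec_def)

lemma psd_diag: assumes "psd P" shows "0 \<le> P$i$i"
proof -
  have "0 \<le> axis i 1 \<bullet> (P *v axis i 1)" using assms unfolding psd_def by blast
  thus ?thesis by (simp add: ax1 ax2 column_def)
qed

lemma tr_sym: "transpose P = P \<Longrightarrow> P$i$j = P$j$i"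
  by (metis transpose_def vec_lambda_beta)
lemma psd_sym: "psd P \<Longrightarrow> P$i$j = P$j$i"
  unfolding psd_def by (metis tr_sym)

lemma qf_shift: fixes W :: "real^'n^'n" assumes "transpose W = W"
  shows "(x + t *\<^sub>R axis a 1) \<bullet> (W *v (x + t *\<^sub>R axis a 1)) =
     x \<bullet> (W *v x) + 2 * t * (\<Sum>j\<in>UNIV. W$a$j * x$j) + t^2 * W$a$a"
proof -
  have s: "\<And>i j. W$i$j = W$j$i" using assms by (metis tr_sym)
  have "(x + t *\<^sub>R axis a 1) \<bullet> (W *v (x + t *\<^sub>R axis a 1)) = x \<bullet> (W *v x) + t * (x \<bullet> (W *v axis a 1)) + t * (axis a 1 \<bullet> (W *v x)) + t^2 * (axis a 1 \<bullet> (W *v axis a 1))"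
    by (simp add: matrix_vector_right_distrib inner_add_left inner_add_right matrix_vector_mult_scaleR power2_eq_square algebra_simps)
  also have "x \<bullet> (W *v axis a 1) = (\<Sum>j\<in>UNIV. W$a$j * x$j)"
    by (simp add: ax1 inner_vec_def column_def s mult.commute)
  also have "axis a 1 \<bullet> (W *v x) = (\<Sum>j\<in>UNIV. W$a$j * x$j)"
    by (simp add: ax2 matrix_vector_mult_def)
  also have "axis a 1 \<bullet> (W *v axis a 1) = W$a$a"
    by (simp add: ax1 ax2 column_def)
  finally show ?thesis by simp
qed

lemma psd_row_zero: fixes W :: "real^'n^'n" assumes "psd W" "W$a$a = 0" shows "W$a$j = 0"
proof (rule ccontr)
  assume ne: "W$a$j \<noteq> 0"
  have sym: "transpose W = W" using assms unfolding psd_def by blast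
  define x :: "real^'n" where "x = axis j 1"
  have sx: "(\<Sum>k\<in>UNIV. W$a$k * x$k) = W$a$j"
    by (simp add: x_def axis_def)
  define t where "t = - (1 + \<bar>W$j$j\<bar>) / (2 * W$a$j)"
  have "0 \<le> (x + t *\<^sub>R axis a 1) \<bullet> (W *v (x + t *\<^sub>R axis a 1))"
    using assms unfolding psd_def by blast
  also have "\<dots> = x \<bullet> (W *v x) + 2 * t * W$a$j"
    using qf_shift[OF sym, of x t a] sx assms(2) by simp
  also have "x \<bullet> (W *v x) = W$j$j"
    by (simp add: x_def ax1 ax2 column_def)
  also have "2 * t * W$a$j = - (1 + \<bar>W$j$j\<bar>)" using ne by (simp add: t_def)
  finally show False by linarith
qed

lemma psd_cs: fixes W :: "real^'n^'n" assumes "psd W"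
  shows "(\<Sum>j\<in>UNIV. W$a$j * x$j)^2 \<le> W$a$a * (x \<bullet> (W *v x))"
proof (cases "W$a$a = 0")
  case True
  then show ?thesis using psd_row_zero[OF assms True] psd_diag[OF assms] assms by (simp add: psd_def)
next
  case False
  have sym: "transpose W = W" using assms unfolding psd_def by blast
  have pos: "W$a$a > 0" using False psd_diag[OF assms, of a] by simp
  define s where "s = (\<Sum>j\<in>UNIV. W$a$j * x$j)"
  define t where "t = - s / W$a$a"
  have "0 \<le> (x + t *\<^sub>R axis a 1) \<bullet> (W *v (x + t *\<^sub>R axis a 1))"
    using assms unfolding psd_def by blast
  also have "\<dots> = x \<bullet> (W *v x) + 2 * t * s + t^2 * W$a$a"
    using qf_shift[OF sym, of x t a] by (simp add: s_def)
  also have "\<dots> = x \<bullet> (W *v x) - s^2 / W$a$a"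
    using pos by (simp add: t_def power2_eq_square field_simps)
  finally have "s^2 / W$a$a \<le> x \<bullet> (W *v x)" by simp
  thus ?thesis using pos by (simp add: s_def field_simps mult.commute)
qed

lemma inner_outer: "(M::real^'n^'n) \<bullet> outer w w = w \<bullet> (M *v w)"
  by (simp add: inner_mat qf_sum outer_def mult_ac)

lemma qf_outer: "x \<bullet> (outer w w *v x) = (w \<bullet> x)^2"
proof -
  have "x \<bullet> (outer w w *v x) = (\<Sum>i\<in>UNIV. x$i * w$i) * (\<Sum>j\<in>UNIV. w$j * x$j)"
    by (simp add: qf_sum outer_def sum_product mult_ac)
  thus ?thesis by (simp add: inner_vec_def power2_eq_square mult.commute)
qed

lemma transpose_outer: "transpose (outer w w) = outer w w"
  by (simp add: transpose_def outer_def vec_eq_iff mult.commute)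

lemma psd_outer: "psd (outer w w)"
  unfolding psd_def by (simp add: transpose_outer qf_outer)

lemma psd_inner_aux:
  fixes M :: "real^'n^'n"
  assumes M: "psd M" and F: "finite F"
  shows "\<forall>W. psd W \<and> (\<forall>i j. i \<notin> F \<longrightarrow> W$i$j = 0) \<longrightarrow> 0 \<le> M \<bullet> W"
  using F
proof (induction F rule: finite_induct)
  case empty
  then show ?case by (simp add: inner_mat)
next
  case (insert a F)
  show ?case
  proof (intro allI impI)
    fix W :: "real^'n^'n" assume H: "psd W \<and> (\<forall>i j. i \<notin> insert a F \<longrightarrow> W$i$j = 0)"
    hence W: "psd W" and Z: "\<And>i j. i \<notin> insert a F \<Longrightarrow> W$i$j = 0" by auto
    show "0 \<le> M \<bullet> W"
    proof (cases "W$a$a = 0")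
      case True
      have "\<And>i j. i \<notin> F \<Longrightarrow> W$i$j = 0"
        using Z psd_row_zero[OF W True] by (metis insertE)
      then show ?thesis using insert.IH W by blast
    next
      case False
      have pos: "W$a$a > 0" using False psd_diag[OF W, of a] by simp
      define w where "w = W$a"
      define W' where "W' = W - (1 / W$a$a) *\<^sub>R outer w w"
      have symW: "transpose W = W" using W unfolding psd_def by blast
      have "psd W'"
        unfolding psd_def
      proof (intro conjI allI)
        show "transpose W' = W'" unfolding W'_def
          by (simp add: transpose_def vec_eq_iff outer_def psd_sym[OF W] mult.commute)
        fix x :: "real^'n"
        have "x \<bullet> (W' *v x) = x \<bullet> (W *v x) - (1 / W$a$a) * (w \<bullet> x)^2"
          unfolding W'_def by (simp add: matrix_vector_mult_diff_rdistrib inner_diff_right qf_outer scaleR_matrix_vector_assoc[symmetric])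
        moreover have "(w \<bullet> x)^2 \<le> W$a$a * (x \<bullet> (W *v x))"
          using psd_cs[OF W, of a x] by (simp add: w_def inner_vec_def)
        ultimately have "0 \<le> W$a$a * (x \<bullet> (W' *v x))" using pos by (simp add: field_simps)
        thus "0 \<le> x \<bullet> (W' *v x)" using pos by (simp add: zero_le_mult_iff)
      qed
      moreover have "\<forall>i j. i \<notin> F \<longrightarrow> W'$i$j = 0"
      proof (intro allI impI)
        fix i j assume "i \<notin> F"
        show "W'$i$j = 0"
        proof (cases "i = a")
          case True then show ?thesis using pos by (simp add: W'_def outer_def w_def)
        next
          case False
          hence "i \<notin> insert a F" using \<open>i \<notin> F\<close> by simp
          hence "W$i$j = 0" "W$a$i = 0" using Z psd_sym[OF W, of a i] by auto
          then show ?thesis by (simp add: W'_def outer_def w_def)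
        qed
      qed
      ultimately have "0 \<le> M \<bullet> W'" using insert.IH by blast
      moreover have "M \<bullet> W = M \<bullet> W' + (1 / W$a$a) * (w \<bullet> (M *v w))"
        by (simp add: W'_def inner_diff_right inner_outer)
      moreover have "0 \<le> w \<bullet> (M *v w)" using M unfolding psd_def by blast
      ultimately show ?thesis using pos by simp
    qed
  qed
qed

lemma psd_inner_nonneg: "psd (M::real^'n^'n) \<Longrightarrow> psd W \<Longrightarrow> 0 \<le> M \<bullet> W"
  using psd_inner_aux[of M UNIV] by simp

lemma sum_option: "(\<Sum>i\<in>(UNIV::'a::finite option set). f i) = f None + (\<Sum>i\<in>UNIV. f (Some i))"
proof -
  have "(UNIV::'a option set) = insert None (range Some)" by (simp add: UNIV_option_conv)
  hence "(\<Sum>i\<in>(UNIV::'a option set). f i) = sum f (insert None (range Some))" by simp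
  also have "\<dots> = f None + sum f (range Some)" by (rule sum.insert) auto
  also have "sum f (range Some) = (\<Sum>i\<in>UNIV. f (Some i))" by (simp add: sum.reindex)
  finally show ?thesis .
qed

lemma ridge_expand: fixes X :: "real^'p^'n"
  shows "ridge_obj X y \<rho> b = y \<bullet> y - 2 * ((transpose X *v y) \<bullet> b) + b \<bullet> ((\<rho> *\<^sub>R mat 1 + transpose X ** X) *v b)"
proof -
  have 2: "\<And>y. y \<bullet> (X *v b) = (transpose X *v y) \<bullet> b"
    by (metis dot_lmul_matrix transpose_matrix_vector)
  have 1: "(X *v b) \<bullet> (X *v b) = b \<bullet> ((transpose X ** X) *v b)"
    using 2[of "X *v b"] matrix_vector_mul_assoc[of "transpose X" X b] inner_commute by metis
  have 3: "(X *v b) v* X = (transpose X ** X) *v b"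
    by (metis transpose_matrix_vector matrix_vector_mul_assoc)
  show ?thesis unfolding ridge_obj_def power2_norm_eq_inner
    by (simp add: 3 inner_diff_left inner_diff_right 1 2 matrix_vector_mult_add_rdistrib inner_add_right inner_commute algebra_simps scaleR_matrix_vector_assoc[symmetric])
qed

definition Gm :: "real^'p^'n \<Rightarrow> real \<Rightarrow> real^'p^'p" where
  "Gm X \<rho> = \<rho> *\<^sub>R mat 1 + transpose X ** X"

lemma tr_inner_eq: "tr_inner (A::real^'n^'n) C = A \<bullet> C"
proof -
  have "tr_inner A C = (\<Sum>i\<in>UNIV. \<Sum>k\<in>UNIV. A$k$i * C$k$i)"
    by (simp add: tr_inner_def trace_def matrix_matrix_mult_def transpose_def)
  also have "\<dots> = (\<Sum>k\<in>UNIV. \<Sum>i\<in>UNIV. A$k$i * C$k$i)" by (rule sum.swap)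
  finally show ?thesis by (simp add: inner_mat)
qed

lemma inner_opt: "(u::real^('a::finite option)) \<bullet> v = u$None * v$None + (\<Sum>i\<in>UNIV. u$(Some i) * v$(Some i))"
  by (simp add: inner_vec_def sum_option)

lemma obj_expand: fixes X :: "real^'p^'n"
  shows "2 * sdp_obj X y \<rho> b B = y \<bullet> y - 2 * ((transpose X *v y) \<bullet> b) + Gm X \<rho> \<bullet> B"
proof -
  let ?C = "sdp_cost X y \<rho>" and ?D = "block_mat 1 b B"
  have r0: "?C$None \<bullet> ?D$None = y \<bullet> y - (transpose X *v y) \<bullet> b"
    by (simp add: inner_opt sdp_cost_def block_mat_def inner_vec_def sum_negf)
  have r1: "?C$(Some i) \<bullet> ?D$(Some i) = - (transpose X *v y)$i * b$i + Gm X \<rho> $ i \<bullet> B $ i" for i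
    by (simp add: inner_opt sdp_cost_def block_mat_def Gm_def inner_vec_def)
  have "?C \<bullet> ?D = ?C$None \<bullet> ?D$None + (\<Sum>i\<in>UNIV. ?C$(Some i) \<bullet> ?D$(Some i))"
    by (simp add: inner_vec_def sum_option)
  also have "\<dots> = y \<bullet> y - 2 * ((transpose X *v y) \<bullet> b) + Gm X \<rho> \<bullet> B"
    unfolding r0 r1 by (simp add: sum.distrib sum_negf sum_subtractf inner_vec_def)
  finally show ?thesis unfolding sdp_obj_def tr_inner_eq by simp
qed

lemma quad_expand: fixes G :: "real^'p^'p" assumes "transpose G = G"
  shows "(a + d) \<bullet> (G *v (a + d)) = a \<bullet> (G *v a) + 2 * ((G *v a) \<bullet> d) + d \<bullet> (G *v d)"
proof -
  have "a \<bullet> (G *v d) = (G *v a) \<bullet> d"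
    by (metis assms dot_lmul_matrix inner_commute transpose_matrix_vector)
  thus ?thesis by (simp add: matrix_vector_right_distrib inner_add_left inner_add_right inner_commute)
qed

lemma transpose_Gm: "transpose (Gm X \<rho>) = Gm X \<rho>"
  by (simp add: Gm_def transpose_def vec_eq_iff matrix_matrix_mult_def mat_def mult.commute)

locale rsetup =
  fixes X :: "real^'p^'n" and y :: "real^'n" and \<rho> :: real and S :: "'p set" and bs :: "real^'p"
  assumes rho: "\<rho> > 0" and rmin: "is_restricted_ridge_min X y \<rho> S bs"
begin

definition "G = Gm X \<rho>"
definition "r = y - X *v bs"
definition "c i = column i X \<bullet> r"
definition "h b = ridge_obj X y \<rho> b"
definition "g = G *v bs - transpose X *v y"

lemma G_sym: "transpose G = G" unfolding G_def by (rule transpose_Gm)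

lemma bs_out: "i \<notin> S \<Longrightarrow> bs$i = 0"
  using rmin unfolding is_restricted_ridge_min_def by blast

lemma h_expand: "h b = y \<bullet> y - 2 * ((transpose X *v y) \<bullet> b) + b \<bullet> (G *v b)"
  unfolding h_def G_def Gm_def by (rule ridge_expand)

lemma E1: "h b = h bs + 2 * (g \<bullet> (b - bs)) + (b - bs) \<bullet> (G *v (b - bs))"
proof -
  have "b \<bullet> (G *v b) = bs \<bullet> (G *v bs) + 2 * ((G *v bs) \<bullet> (b - bs)) + (b - bs) \<bullet> (G *v (b - bs))"
    using quad_expand[OF G_sym, of bs "b - bs"] by simp
  thus ?thesis unfolding h_expand g_def by (simp add: inner_diff_left inner_diff_right algebra_simps)
qed

lemma E2: "2 * sdp_obj X y \<rho> b B = h b + G \<bullet> (B - outer b b)"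
  unfolding obj_expand h_expand G_def by (simp add: inner_diff_right inner_outer)

lemma G_diag: "G$i$i \<ge> \<rho>"
proof -
  have "(transpose X ** X)$i$i = (\<Sum>l\<in>UNIV. (X$l$i)^2)"
    by (simp add: matrix_matrix_mult_def transpose_def power2_eq_square)
  moreover have "(\<Sum>l\<in>UNIV. (X$l$i)^2) \<ge> 0" by (simp add: sum_nonneg)
  ultimately show ?thesis by (simp add: G_def Gm_def mat_def)
qed

lemma g_comp: "g$i = \<rho> * bs$i - c i"
proof -
  have "(G *v bs)$i = \<rho> * bs$i + (transpose X *v (X *v bs))$i"
    by (simp add: G_def Gm_def matrix_vector_mult_add_rdistrib matrix_vector_mul_assoc scaleR_matrix_vector_assoc[symmetric])
  moreover have "c i = (transpose X *v r)$i"
    by (simp add: c_def column_def inner_vec_def matrix_vector_mult_def transpose_def mult.commute)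
  ultimately show ?thesis
    by (simp add: g_def r_def matrix_vector_mult_diff_distrib)
qed

lemma g_in: assumes "i \<in> S" shows "g$i = 0"
proof (rule ccontr)
  assume ne: "g$i \<noteq> 0"
  have Gp: "G$i$i > 0" using G_diag[of i] rho by linarith
  define t where "t = - g$i / G$i$i"
  define b where "b = bs + t *\<^sub>R axis i 1"
  have "\<forall>j. j \<notin> S \<longrightarrow> b$j = 0" using bs_out assms by (auto simp: b_def axis_def)
  hence "h bs \<le> h b" using rmin unfolding is_restricted_ridge_min_def h_def by blast
  also have "h b = h bs + 2 * t * g$i + t^2 * G$i$i"
    using E1[of b] by (simp add: b_def inner_axis ax1 ax2 column_def power2_eq_square algebra_simps)
  also have "\<dots> = h bs - (g$i)^2 / G$i$i"
    using Gp by (simp add: t_def power2_eq_square field_simps)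
  finally have "(g$i)^2 / G$i$i \<le> 0" by simp
  moreover have "(g$i)^2 / G$i$i > 0" using ne Gp by simp
  ultimately show False by simp
qed

lemma c_in: "i \<in> S \<Longrightarrow> c i = \<rho> * bs$i"
  using g_in g_comp by force

lemma g_out: "i \<notin> S \<Longrightarrow> g$i = - c i"
  using g_comp bs_out by simp


lemma XS_r: "(XS_XSt X S *v r)$i = \<rho> * (X *v bs)$i"
proof -
  have "(XS_XSt X S *v r)$i = (\<Sum>l\<in>UNIV. (\<Sum>j\<in>S. X$i$j * X$l$j) * r$l)"
    by (simp add: XS_XSt_def matrix_vector_mult_def)
  also have "\<dots> = (\<Sum>l\<in>UNIV. \<Sum>j\<in>S. X$i$j * (X$l$j * r$l))"
    by (simp add: sum_distrib_right mult.assoc)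
  also have "\<dots> = (\<Sum>j\<in>S. \<Sum>l\<in>UNIV. X$i$j * (X$l$j * r$l))"
    by (rule sum.swap)
  also have "\<dots> = (\<Sum>j\<in>S. X$i$j * c j)"
    by (simp add: c_def column_def inner_vec_def sum_distrib_left)
  also have "\<dots> = (\<Sum>j\<in>S. \<rho> * (X$i$j * bs$j))"
    by (rule sum.cong) (auto simp: c_in)
  also have "\<dots> = \<rho> * (\<Sum>j\<in>UNIV. X$i$j * bs$j)"
  proof -
    have "(\<Sum>j\<in>UNIV. X$i$j * bs$j) = (\<Sum>j\<in>S. X$i$j * bs$j)"
      by (rule sum.mono_neutral_right) (auto simp: bs_out)
    thus ?thesis by (simp add: sum_distrib_left)
  qed
  finally show ?thesis by (simp add: matrix_vector_mult_def)
qed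

definition "Am = mat 1 + inverse \<rho> *\<^sub>R XS_XSt X S"

lemma Am_r: "Am *v r = y"
proof -
  have "Am *v r = r + inverse \<rho> *\<^sub>R (XS_XSt X S *v r)"
    by (simp add: Am_def matrix_vector_mult_add_rdistrib scaleR_matrix_vector_assoc[symmetric])
  also have "inverse \<rho> *\<^sub>R (XS_XSt X S *v r) = X *v bs"
    using rho by (simp add: vec_eq_iff XS_r)
  finally show ?thesis by (simp add: r_def)
qed

lemma XS_qf: "0 \<le> x \<bullet> (XS_XSt X S *v x)"
proof -
  have "x \<bullet> (XS_XSt X S *v x) = (\<Sum>i\<in>UNIV. \<Sum>l\<in>UNIV. \<Sum>j\<in>S. x$i * (X$i$j * X$l$j) * x$l)"
    by (simp add: qf_sum XS_XSt_def sum_distrib_left sum_distrib_right)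
  also have "\<dots> = (\<Sum>j\<in>S. (\<Sum>i\<in>UNIV. x$i * X$i$j)^2)"
  proof -
    have "(\<Sum>i\<in>UNIV. \<Sum>l\<in>UNIV. \<Sum>j\<in>S. x$i * (X$i$j * X$l$j) * x$l) = (\<Sum>i\<in>UNIV. \<Sum>j\<in>S. \<Sum>l\<in>UNIV. x$i * (X$i$j * X$l$j) * x$l)"
      by (rule sum.cong[OF refl], rule sum.swap)
    also have "\<dots> = (\<Sum>j\<in>S. \<Sum>i\<in>UNIV. \<Sum>l\<in>UNIV. x$i * (X$i$j * X$l$j) * x$l)"
      by (rule sum.swap)
    also have "\<dots> = (\<Sum>j\<in>S. (\<Sum>i\<in>UNIV. x$i * X$i$j)^2)"
      by (simp add: power2_eq_square sum_product mult_ac)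
    finally show ?thesis .
  qed
  also have "\<dots> \<ge> 0" by (simp add: sum_nonneg)
  finally show ?thesis .
qed

lemma Am_inv: "invertible Am"
proof -
  have "\<forall>x. Am *v x = 0 \<longrightarrow> x = 0"
  proof (intro allI impI)
    fix x assume "Am *v x = 0"
    hence "0 = x \<bullet> (Am *v x)" by simp
    also have "x \<bullet> (Am *v x) = x \<bullet> x + inverse \<rho> * (x \<bullet> (XS_XSt X S *v x))"
      by (simp add: Am_def matrix_vector_mult_add_rdistrib scaleR_matrix_vector_assoc[symmetric] inner_add_right)
    finally have "x \<bullet> x \<le> 0" using XS_qf[of x] rho by (smt (verit) inverse_positive_iff_positive mult_nonneg_nonneg)
    thus "x = 0" by (metis inner_eq_zero_iff inner_ge_zero order_antisym)
  qed
  then obtain B where "B ** Am = mat 1" using matrix_left_invertible_ker by blast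
  moreover hence "Am ** B = mat 1" using matrix_left_right_inverse by blast
  ultimately show ?thesis unfolding invertible_def by blast
qed

lemma M_y: "Mmat X \<rho> S *v y = r"
proof -
  have "Am ** matrix_inv Am = mat 1 \<and> matrix_inv Am ** Am = mat 1"
    using Am_inv unfolding invertible_def matrix_inv_def by (rule someI_ex)
  hence "matrix_inv Am ** Am = mat 1" by blast
  hence "matrix_inv Am *v (Am *v r) = r" by (simp add: matrix_vector_mul_assoc)
  thus ?thesis using Am_r by (simp add: Mmat_def Am_def)
qed

lemma c_eq: "column i X \<bullet> (Mmat X \<rho> S *v y) = c i"
  by (simp add: M_y c_def)

end


lemma mat22_entries: "mat22 a b c d $ 1 $ 1 = a" "mat22 a b c d $ 1 $ 2 = b" "mat22 a b c d $ 2 $ 1 = c" "mat22 a b c d $ 2 $ 2 = d"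
  by (simp_all add: mat22_def)

lemma qf2: "(x::real^2) \<bullet> (mat22 a b c d *v x) = a * (x$1)^2 + (b + c) * x$1 * x$2 + d * (x$2)^2"
  by (simp add: qf_sum sum_2 mat22_entries power2_eq_square algebra_simps)

lemma mat22_psd_iff: "psd (mat22 z b b B) \<longleftrightarrow> 0 \<le> z \<and> 0 \<le> B \<and> b^2 \<le> z * B"
proof
  assume P: "psd (mat22 z b b B)"
  have q: "\<And>x::real^2. 0 \<le> z * (x$1)^2 + 2 * b * x$1 * x$2 + B * (x$2)^2"
    using P unfolding psd_def qf2 by (metis mult_2 distrib_right)
  have z: "0 \<le> z" using q[of "vector [1, 0]"] by simp
  have B: "0 \<le> B" using q[of "vector [0, 1]"] by simp
  have "b^2 \<le> z * B"
  proof (cases "B = 0")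
    case True
    have "b = 0"
    proof (rule ccontr)
      assume "b \<noteq> 0"
      have "0 \<le> z + 2 * b * (- (z + 1) / (2 * b))" using q[of "vector [1, - (z + 1) / (2 * b)]"] True by simp
      also have "\<dots> = -1" using \<open>b \<noteq> 0\<close> by (simp add: field_simps)
      finally show False by simp
    qed
    thus ?thesis using True by simp
  next
    case False
    have "0 \<le> z * B^2 + 2 * b * B * (-b) + B * b^2" using q[of "vector [B, -b]"] by simp
    hence "0 \<le> B * (z * B - b^2)" by (simp add: power2_eq_square algebra_simps)
    thus ?thesis using False B by (simp add: zero_le_mult_iff)
  qed
  thus "0 \<le> z \<and> 0 \<le> B \<and> b^2 \<le> z * B" using z B by simp
next
  assume H: "0 \<le> z \<and> 0 \<le> B \<and> b^2 \<le> z * B"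
  show "psd (mat22 z b b B)"
    unfolding psd_def
  proof (intro conjI allI)
    show "transpose (mat22 z b b B) = mat22 z b b B"
      by (simp add: vec_eq_iff transpose_def forall_2 mat22_entries)
    fix x :: "real^2"
    have "0 \<le> z * (z * (x$1)^2 + 2 * b * x$1 * x$2 + B * (x$2)^2)"
    proof -
      have "z * (z * (x$1)^2 + 2 * b * x$1 * x$2 + B * (x$2)^2) = (z * x$1 + b * x$2)^2 + (z * B - b^2) * (x$2)^2"
        by (simp add: power2_eq_square algebra_simps)
      also have "\<dots> \<ge> 0" using H by simp
      finally show ?thesis .
    qed
    moreover have "z = 0 \<Longrightarrow> 0 \<le> z * (x$1)^2 + 2 * b * x$1 * x$2 + B * (x$2)^2"
    proof -
      assume "z = 0"
      hence "b = 0" using H by (metis mult_zero_left power2_eq_square zero_le_square mult_eq_0_iff order_antisym)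
      thus ?thesis using H \<open>z = 0\<close> by simp
    qed
    ultimately have "0 \<le> z * (x$1)^2 + 2 * b * x$1 * x$2 + B * (x$2)^2"
      using H by (cases "z = 0") (auto simp: zero_le_mult_iff)
    thus "0 \<le> x \<bullet> (mat22 z b b B *v x)" unfolding qf2 by (simp add: algebra_simps)
  qed
qed

lemma block_qf: "x \<bullet> (block_mat a b B *v x) = a * (x$None)^2 + 2 * x$None * (b \<bullet> (\<chi> i. x$Some i)) + (\<chi> i. x$Some i) \<bullet> (B *v (\<chi> i. x$Some i))"
proof -
  define v where "v = (\<chi> i. x$Some i)"
  have n: "(block_mat a b B *v x)$None = a * x$None + b \<bullet> v"
    by (simp add: matrix_vector_mult_def sum_option block_mat_def v_def inner_vec_def)
  have s: "(block_mat a b B *v x)$Some i = b$i * x$None + (B *v v)$i" for i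
    by (simp add: matrix_vector_mult_def sum_option block_mat_def v_def)
  have "x \<bullet> (block_mat a b B *v x) = x$None * (a * x$None + b \<bullet> v) + (\<Sum>i\<in>UNIV. v$i * (b$i * x$None + (B *v v)$i))"
    by (simp add: inner_opt n s v_def)
  also have "\<dots> = a * (x$None)^2 + 2 * x$None * (b \<bullet> v) + v \<bullet> (B *v v)"
    by (simp add: sum.distrib inner_vec_def sum_distrib_left sum_distrib_right power2_eq_square algebra_simps)
  finally show ?thesis by (simp add: v_def)
qed

lemma block_transpose: "transpose (block_mat a b B) = block_mat a b (transpose B)"
  by (simp add: vec_eq_iff transpose_def block_mat_def split: option.splits)

lemma block_psd_W: assumes "psd (block_mat 1 b B)" shows "psd (B - outer b b)"
  unfolding psd_def
proof (intro conjI allI)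
  have "transpose B = B"
  proof -
    have "transpose (block_mat 1 b B) = block_mat 1 b B" using assms unfolding psd_def by blast
    hence "\<And>i j. B$j$i = B$i$j" unfolding block_transpose
      by (metis (no_types, lifting) block_mat_def option.simps(5) transpose_def vec_lambda_beta)
    thus ?thesis by (simp add: vec_eq_iff transpose_def)
  qed
  thus "transpose (B - outer b b) = B - outer b b"
    by (simp add: vec_eq_iff transpose_def outer_def mult.commute)
  fix v :: "real^'a"
  define x :: "real^('a option)" where "x = (\<chi> i. case i of None \<Rightarrow> - (b \<bullet> v) | Some j \<Rightarrow> v$j)"
  have xv: "(\<chi> i. x$Some i) = v" by (simp add: x_def vec_eq_iff)
  have "0 \<le> x \<bullet> (block_mat 1 b B *v x)" using assms unfolding psd_def by blast
  also have "\<dots> = v \<bullet> (B *v v) - (b \<bullet> v)^2" unfolding block_qf xv by (simp add: x_def power2_eq_square)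
  also have "\<dots> = v \<bullet> ((B - outer b b) *v v)" by (simp add: matrix_vector_mult_diff_rdistrib inner_diff_right qf_outer)
  finally show "0 \<le> v \<bullet> ((B - outer b b) *v v)" .
qed

lemma block_psd_intro: assumes "psd W" shows "psd (block_mat 1 b (outer b b + W))"
  unfolding psd_def
proof (intro conjI allI)
  have "transpose W = W" using assms unfolding psd_def by blast
  hence t: "transpose (outer b b + W) = outer b b + W"
    by (simp add: transpose_def vec_eq_iff outer_def mult.commute)
  show "transpose (block_mat 1 b (outer b b + W)) = block_mat 1 b (outer b b + W)"
    unfolding block_transpose t ..
  fix x :: "real^('a option)"
  define v where "v = (\<chi> i. x$Some i)"
  have "x \<bullet> (block_mat 1 b (outer b b + W) *v x) = (x$None + b \<bullet> v)^2 + v \<bullet> (W *v v)"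
    unfolding block_qf v_def[symmetric] by (simp add: matrix_vector_mult_add_rdistrib inner_add_right qf_outer power2_eq_square algebra_simps)
  also have "\<dots> \<ge> 0" using assms unfolding psd_def by simp
  finally show "0 \<le> x \<bullet> (block_mat 1 b (outer b b + W) *v x)" .
qed


lemma realA: fixes z B b \<beta> :: real
  assumes "0 \<le> z" "0 \<le> B" "b^2 \<le> z * B" shows "0 \<le> B - 2 * b * \<beta> + z * \<beta>^2"
proof (cases "z = 0")
  case True
  hence "b = 0" using assms by simp
  thus ?thesis using True assms by simp
next
  case False
  hence zp: "z > 0" using assms by simp
  have "z * (B - 2 * b * \<beta> + z * \<beta>^2) \<ge> (b - z * \<beta>)^2"
    using assms(3) by (simp add: power2_eq_square algebra_simps)
  hence "z * (B - 2 * b * \<beta> + z * \<beta>^2) \<ge> 0" by (meson order_trans zero_le_power2)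
  thus ?thesis using zp by (simp add: zero_le_mult_iff)
qed

lemma realB: fixes d lam z B b c \<rho> :: real
  assumes "0 \<le> d" "0 \<le> lam" "0 \<le> z" "0 \<le> B" "b^2 \<le> z * B" "c^2 \<le> lam * d" "\<rho> > 0"
  shows "0 \<le> \<rho>^2 * d * B - 2 * \<rho> * c * b + lam * z"
proof -
  define P where "P = \<rho>^2 * d * B + lam * z"
  have P0: "0 \<le> P" using assms by (simp add: P_def)
  have "P^2 - 4 * (\<rho>^2 * d * B) * (lam * z) = (\<rho>^2 * d * B - lam * z)^2"
    unfolding P_def by (simp add: power2_eq_square algebra_simps)
  hence "P^2 \<ge> 4 * (\<rho>^2 * d * B) * (lam * z)" by (metis diff_ge_0_iff_ge zero_le_power2)
  also have "4 * (\<rho>^2 * d * B) * (lam * z) = 4 * \<rho>^2 * ((lam * d) * (z * B))" by (simp add: algebra_simps)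
  also have "\<dots> \<ge> 4 * \<rho>^2 * (c^2 * b^2)"
    using assms by (intro mult_left_mono mult_mono) auto
  finally have "(2 * \<rho> * c * b)^2 \<le> P^2" by (simp add: power2_eq_square algebra_simps)
  hence "\<bar>2 * \<rho> * c * b\<bar> \<le> \<bar>P\<bar>" by (simp only: abs_le_square_iff)
  hence "\<bar>2 * \<rho> * c * b\<bar> \<le> P" using P0 by simp
  thus ?thesis unfolding P_def by linarith
qed

lemma psd_add: "psd A \<Longrightarrow> psd B \<Longrightarrow> psd (A + B)"
  unfolding psd_def by (simp add: matrix_vector_mult_add_rdistrib inner_add_right transpose_def vec_eq_iff)

lemma diag_inner: "diag_mat d \<bullet> (P::real^'p^'p) = (\<Sum>i\<in>UNIV. d$i * P$i$i)"
proof -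
  have "\<And>i. (\<Sum>j\<in>UNIV. diag_mat d $i$j * P$i$j) = (\<Sum>j\<in>UNIV. if j = i then d$i * P$i$i else 0)"
    by (rule sum.cong) (auto simp: diag_mat_def)
  thus ?thesis by (simp add: inner_mat)
qed

context rsetup
begin

definition "A0 = inverse \<rho> *\<^sub>R (transpose X ** X) + mat 1"

lemma G_A0: "G = \<rho> *\<^sub>R A0"
  using rho by (simp add: G_def Gm_def A0_def scaleR_add_right)

lemma cand_obj: "2 * sdp_obj X y \<rho> bs (outer bs bs) = h bs"
  by (simp add: E2)

lemma cand_feasible: assumes "card S = k" shows "sdp_feasible k bs (outer bs bs) (indicator_vec S)"
  unfolding sdp_feasible_def
proof (intro conjI allI)
  show "symmetric_mat (outer bs bs)" by (simp add: symmetric_mat_def transpose_outer)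
  have "psd (0::real^'p^'p)" by (simp add: psd_def transpose_def vec_eq_iff)
  thus "psd (block_mat 1 bs (outer bs bs))" using block_psd_intro[of 0 bs] by simp
  fix i
  show "psd (mat22 (indicator_vec S $ i) (bs $ i) (bs $ i) (outer bs bs $ i $ i))"
    unfolding mat22_psd_iff by (simp add: indicator_vec_def outer_def bs_out power2_eq_square)
next
  have "(\<Sum>i\<in>UNIV. indicator_vec S $ i) = real (card S)"
    by (simp add: indicator_vec_def sum.If_cases)
  thus "(\<Sum>i\<in>UNIV. indicator_vec S $ i) \<le> real k" using assms by simp
qed

lemma sufficiency:
  assumes card: "card S = k"
    and d0: "\<forall>i. d $ i \<ge> 0" and l0: "lam \<ge> 0"
    and P: "psd (A0 - diag_mat d)"
    and cS: "\<forall>i\<in>S. lam = d $ i * (c i)^2"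
    and cN: "\<forall>i. i \<notin> S \<longrightarrow> lam * d $ i \<ge> (c i)^2"
    and F: "sdp_feasible k b B z"
  shows "sdp_obj X y \<rho> bs (outer bs bs) \<le> sdp_obj X y \<rho> b B"
proof -
  have Bl: "psd (block_mat 1 b B)" and M22: "\<And>i. psd (mat22 (z $ i) (b $ i) (b $ i) (B $ i $ i))"
    and zs: "(\<Sum>i\<in>UNIV. z $ i) \<le> real k" using F unfolding sdp_feasible_def by auto
  have zi: "\<And>i. 0 \<le> z$i \<and> 0 \<le> B$i$i \<and> (b$i)^2 \<le> z$i * B$i$i" using M22 mat22_psd_iff by blast
  define W where "W = B - outer b b"
  define D where "D = b - bs"
  define Psi where "Psi = W + outer D D"
  have PsiP: "psd Psi" unfolding Psi_def W_def using block_psd_W[OF Bl] psd_outer psd_add by blast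
  have "2 * sdp_obj X y \<rho> b B = h bs + 2 * (g \<bullet> D) + G \<bullet> Psi"
    unfolding E2 E1[of b] Psi_def D_def W_def by (simp add: inner_add_right inner_outer)
  moreover have "G \<bullet> Psi \<ge> \<rho> * (\<Sum>i\<in>UNIV. d$i * Psi$i$i)"
  proof -
    have "0 \<le> (A0 - diag_mat d) \<bullet> Psi" using psd_inner_nonneg[OF P PsiP] .
    hence "diag_mat d \<bullet> Psi \<le> A0 \<bullet> Psi" by (simp add: inner_diff_left)
    thus ?thesis using rho by (simp add: G_A0 diag_inner)
  qed
  moreover have "g \<bullet> D = (\<Sum>i\<in>UNIV. g$i * D$i)" by (simp add: inner_vec_def)
  ultimately have key: "2 * sdp_obj X y \<rho> b B - h bs \<ge> (\<Sum>i\<in>UNIV. \<rho> * d$i * Psi$i$i + 2 * g$i * D$i)"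
    by (simp add: sum.distrib sum_distrib_left mult.assoc)
  have Pii: "\<And>i. Psi$i$i = B$i$i - (b$i)^2 + (D$i)^2"
    by (simp add: Psi_def W_def outer_def power2_eq_square)
  have termb: "\<rho> * d$i * Psi$i$i + 2 * g$i * D$i \<ge> (lam / \<rho>) * (indicator_vec S $ i - z$i)" for i
  proof (cases "i \<in> S")
    case True
    have l: "lam = \<rho>^2 * d$i * (bs$i)^2" using cS True c_in[OF True] by (simp add: power2_eq_square algebra_simps)
    have "0 \<le> \<rho> * d$i * (B$i$i - 2 * b$i * bs$i + z$i * (bs$i)^2)"
      using realA[of "z$i" "B$i$i" "b$i" "bs$i"] zi[of i] d0 rho by simp
    moreover have "\<rho> * d$i * Psi$i$i + 2 * g$i * D$i - (lam / \<rho>) * (indicator_vec S $ i - z$i)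
       = \<rho> * d$i * (B$i$i - 2 * b$i * bs$i + z$i * (bs$i)^2)"
      using rho True by (simp add: Pii g_in l D_def indicator_vec_def power2_eq_square field_simps)
    ultimately show ?thesis by linarith
  next
    case False
    have "0 \<le> \<rho>^2 * d$i * B$i$i - 2 * \<rho> * c i * b$i + lam * z$i"
      using realB[of "d$i" lam "z$i" "B$i$i" "b$i" "c i" \<rho>] zi[of i] d0 l0 cN False rho by (simp add: mult.commute)
    moreover have "\<rho> * d$i * Psi$i$i + 2 * g$i * D$i - (lam / \<rho>) * (indicator_vec S $ i - z$i)
       = (\<rho>^2 * d$i * B$i$i - 2 * \<rho> * c i * b$i + lam * z$i) / \<rho>"
      using rho False by (simp add: Pii g_out bs_out D_def indicator_vec_def power2_eq_square field_simps)
    moreover have "0 \<le> (\<rho>^2 * d$i * B$i$i - 2 * \<rho> * c i * b$i + lam * z$i) / \<rho>"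
      using calculation(1) rho by (simp add: divide_nonneg_pos)
    ultimately show ?thesis by linarith
  qed
  have "(\<Sum>i\<in>UNIV. (lam / \<rho>) * (indicator_vec S $ i - z$i)) = (lam / \<rho>) * (real (card S) - (\<Sum>i\<in>UNIV. z$i))"
  proof -
    have "(\<Sum>i\<in>UNIV. indicator_vec S $ i) = real (card S)"
      by (simp add: indicator_vec_def sum.If_cases)
    moreover have "(\<Sum>i\<in>UNIV. (lam / \<rho>) * (indicator_vec S $ i - z$i)) = (lam / \<rho>) * ((\<Sum>i\<in>UNIV. indicator_vec S $ i) - (\<Sum>i\<in>UNIV. z$i))"
      by (simp only: sum_distrib_left[symmetric] sum_subtractf)
    ultimately show ?thesis by simp
  qed
  also have "\<dots> \<ge> 0" using card zs l0 rho by simp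
  finally have s0: "0 \<le> (\<Sum>i\<in>UNIV. (lam / \<rho>) * (indicator_vec S $ i - z$i))" .
  have "(\<Sum>i\<in>UNIV. (lam / \<rho>) * (indicator_vec S $ i - z$i)) \<le> (\<Sum>i\<in>UNIV. \<rho> * d$i * Psi$i$i + 2 * g$i * D$i)"
    by (rule sum_mono) (rule termb)
  hence "0 \<le> (\<Sum>i\<in>UNIV. \<rho> * d$i * Psi$i$i + 2 * g$i * D$i)" using s0 by linarith
  hence "h bs \<le> 2 * sdp_obj X y \<rho> b B" using key by linarith
  thus ?thesis using cand_obj by linarith
qed

end


lemma psd_scale: "0 \<le> s \<Longrightarrow> psd P \<Longrightarrow> psd (s *\<^sub>R P)"
  unfolding psd_def by (simp add: scaleR_matrix_vector_assoc[symmetric] transpose_def vec_eq_iff)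

lemma psd_zero: "psd (0::real^'n^'n)"
  by (simp add: psd_def transpose_def vec_eq_iff)

lemma sum_split_S: "(\<Sum>i\<in>UNIV. f i) = (\<Sum>i\<in>S. f i) + (\<Sum>i\<in>-S. (f i :: real))" for S :: "'a::finite set"
proof -
  have "(\<Sum>i\<in>S \<union> -S. f i) = (\<Sum>i\<in>S. f i) + (\<Sum>i\<in>-S. f i)"
    by (rule sum.union_disjoint) auto
  thus ?thesis by simp
qed

context rsetup
begin

lemma psd_A0: "psd A0"
  unfolding psd_def
proof (intro conjI allI)
  show "transpose A0 = A0"
    by (simp add: A0_def transpose_def vec_eq_iff matrix_matrix_mult_def mat_def mult.commute)
  fix x :: "real^'p"
  have "x \<bullet> ((transpose X ** X) *v x) = (X *v x) \<bullet> (X *v x)"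
    by (metis dot_lmul_matrix inner_commute matrix_vector_mul_assoc transpose_matrix_vector)
  hence "0 \<le> x \<bullet> ((transpose X ** X) *v x)" by simp
  hence "0 \<le> inverse \<rho> * (x \<bullet> ((transpose X ** X) *v x)) + x \<bullet> x" using rho by simp
  thus "0 \<le> x \<bullet> (A0 *v x)"
    by (simp add: A0_def matrix_vector_mult_add_rdistrib inner_add_right scaleR_matrix_vector_assoc[symmetric])
qed

lemma E1v: "h (bs + v) = h bs + 2 * (g \<bullet> v) + v \<bullet> (G *v v)"
  using E1[of "bs + v"] by simp

lemma key:
  assumes card: "card S = k" and opt: "\<forall>b B z. sdp_feasible k b B z \<longrightarrow> sdp_obj X y \<rho> bs (outer bs bs) \<le> sdp_obj X y \<rho> b B"
    and hS: "\<forall>i\<in>S. c i \<noteq> 0" and PsiP: "psd Psi"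
  shows "4 * (\<Sum>i\<in>S. Psi$i$i / (c i)^2) * (\<Sum>i\<in>-S. Psi$i$i * (c i)^2) \<le> (A0 \<bullet> Psi)^2"
proof (rule ccontr)
  define a where "a = A0 \<bullet> Psi"
  define p where "p = (\<Sum>i\<in>S. Psi$i$i / (c i)^2)"
  define q where "q = (\<Sum>i\<in>-S. Psi$i$i * (c i)^2)"
  assume "\<not> 4 * (\<Sum>i\<in>S. Psi$i$i / (c i)^2) * (\<Sum>i\<in>-S. Psi$i$i * (c i)^2) \<le> (A0 \<bullet> Psi)^2"
  hence lt: "a^2 < 4 * p * q" unfolding a_def p_def q_def by simp
  have a0: "0 \<le> a" unfolding a_def by (rule psd_inner_nonneg[OF psd_A0 PsiP])
  have p0: "0 \<le> p" unfolding p_def using psd_diag[OF PsiP] by (simp add: sum_nonneg)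
  have q0: "0 \<le> q" unfolding q_def using psd_diag[OF PsiP] by (simp add: sum_nonneg)
  have "0 < 4 * p * q" using lt zero_le_power2[of a] by linarith
  hence pq: "0 < p * q" by (simp add: mult.assoc)
  hence pp: "p > 0" and qp: "q > 0" using p0 q0 by (auto simp: zero_less_mult_iff)
  define m where "m = sqrt (p * q)"
  have m0: "m > 0" using pq by (simp add: m_def)
  have m2: "m^2 = p * q" using pq by (simp add: m_def)
  have am: "a < 2 * m"
  proof -
    have "a^2 < (2 * m)^2" using lt m2 by (simp add: power2_eq_square algebra_simps)
    thus ?thesis by (rule power2_less_imp_less) (use m0 in simp)
  qed
  define t where "t = \<rho> * (a + 2 * m) / (4 * q)"
  have T1: "\<rho> * a - 2 * t * q < 0"
  proof -
    have "2 * t * q = \<rho> * (a + 2 * m) / 2" using qp by (simp add: t_def field_simps)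
    moreover have "\<rho> * a < \<rho> * (2 * m)" using am rho by simp
    ultimately show ?thesis by (simp add: algebra_simps)
  qed
  have T2: "t^2 * q < \<rho>^2 * p"
  proof -
    have "(a + 2 * m)^2 < (4 * m)^2" using am a0 m0 by (intro power_strict_mono) auto
    hence "(a + 2 * m)^2 < 16 * (p * q)" using m2 by (simp add: power2_eq_square algebra_simps)
    hence "\<rho>^2 * (a + 2 * m)^2 < \<rho>^2 * (16 * (p * q))" using rho by simp
    moreover have "(t^2 * q) * (16 * q) = \<rho>^2 * (a + 2 * m)^2" using qp by (simp add: t_def power2_eq_square field_simps)
    ultimately have "(t^2 * q) * (16 * q) < (\<rho>^2 * p) * (16 * q)" by (simp add: algebra_simps)
    thus ?thesis by (rule mult_right_less_imp_less) (use qp in simp)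
  qed
  have t0: "t > 0" using rho qp a0 m0 by (simp add: t_def)
  have bsS: "\<And>i. i \<in> S \<Longrightarrow> bs$i \<noteq> 0" using hS c_in by force
  define v :: "real^'p" where "v = (\<chi> j. if j \<in> S then 0 else c j * Psi$j$j)"
  define K where "K = v \<bullet> (G *v v)"
  define F where "F = (\<lambda>s. \<Sum>i\<in>S. Psi$i$i / ((bs$i)^2 + s * Psi$i$i))"
  have F0: "F 0 = \<rho>^2 * p"
  proof -
    have "F 0 = (\<Sum>i\<in>S. \<rho>^2 * (Psi$i$i / (c i)^2))"
      unfolding F_def by (rule sum.cong) (use rho c_in in \<open>auto simp: power2_eq_square field_simps\<close>)
    thus ?thesis by (simp add: p_def sum_distrib_left)
  qed
  have lim: "((\<lambda>s. Psi$i$i / ((bs$i)^2 + s * Psi$i$i)) \<longlongrightarrow> Psi$i$i / ((bs$i)^2 + 0 * Psi$i$i)) (at_right 0)"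
    if iS: "i \<in> S" for i
  proof (rule tendsto_divide)
    show "((\<lambda>s. (bs$i)^2 + s * Psi$i$i) \<longlongrightarrow> (bs$i)^2 + 0 * Psi$i$i) (at_right 0)"
      by (intro tendsto_add tendsto_mult tendsto_const tendsto_ident_at)
    show "(bs$i)^2 + 0 * Psi$i$i \<noteq> 0" using bsS[OF iS] by simp
  qed (rule tendsto_const)
  have "(F \<longlongrightarrow> F 0) (at_right 0)"
    unfolding F_def by (rule tendsto_sum) (use lim in simp)
  hence ev1: "\<forall>\<^sub>F s in at_right 0. t^2 * q < F s" using F0 T2 by (simp add: order_tendstoD(1))
  have "((\<lambda>s. \<rho> * a - 2 * t * q + s * (t^2 * K)) \<longlongrightarrow> \<rho> * a - 2 * t * q + 0 * (t^2 * K)) (at_right 0)"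
    by (intro tendsto_intros)
  hence ev2: "\<forall>\<^sub>F s in at_right 0. \<rho> * a - 2 * t * q + s * (t^2 * K) < 0" using T1 by (simp add: order_tendstoD(2))
  have "\<forall>\<^sub>F s in at_right 0. 0 < s \<and> t^2 * q < F s \<and> \<rho> * a - 2 * t * q + s * (t^2 * K) < 0"
    using ev1 ev2 eventually_at_right_less[of 0] by eventually_elim auto
  hence "\<exists>s. 0 < s \<and> t^2 * q < F s \<and> \<rho> * a - 2 * t * q + s * (t^2 * K) < 0"
    using eventually_happens by force
  then obtain s where s0: "0 < s" and sF: "t^2 * q < F s" and sO: "\<rho> * a - 2 * t * q + s * (t^2 * K) < 0"
    by blast
  define b where "b = bs + (s * t) *\<^sub>R v"
  define B where "B = outer b b + s *\<^sub>R Psi"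
  define z :: "real^'p" where "z = (\<chi> i. (b$i)^2 / B$i$i)"
  have Bii: "\<And>i. B$i$i = (b$i)^2 + s * Psi$i$i" by (simp add: B_def outer_def power2_eq_square)
  have bS: "\<And>i. i \<in> S \<Longrightarrow> b$i = bs$i" by (simp add: b_def v_def)
  have bN: "\<And>i. i \<notin> S \<Longrightarrow> b$i = s * t * c i * Psi$i$i" by (simp add: b_def v_def bs_out)
  have PsiS: "transpose Psi = Psi" using PsiP unfolding psd_def by blast
  have feas: "sdp_feasible k b B z"
    unfolding sdp_feasible_def
  proof (intro conjI allI)
    show "symmetric_mat B" unfolding symmetric_mat_def B_def
      using PsiS by (simp add: transpose_def vec_eq_iff outer_def mult.commute)
    show "psd (block_mat 1 b B)" unfolding B_def
      by (rule block_psd_intro, rule psd_scale) (use s0 PsiP in auto)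
    fix i
    have Pi: "0 \<le> Psi$i$i" using psd_diag[OF PsiP] .
    show "psd (mat22 (z $ i) (b $ i) (b $ i) (B $ i $ i))"
      unfolding mat22_psd_iff
    proof (intro conjI)
      have sP: "0 \<le> s * Psi$i$i" using s0 Pi by simp
      show Bp: "0 \<le> B$i$i" unfolding Bii using sP by simp
      show "0 \<le> z$i" unfolding z_def using Bp by simp
      show "(b$i)^2 \<le> z$i * B$i$i"
      proof (cases "B$i$i = 0")
        case True
        hence "(b$i)^2 \<le> 0" using Bii[of i] sP by linarith
        thus ?thesis using True by simp
      next
        case False thus ?thesis by (simp add: z_def)
      qed
    qed
  next
    have zS: "(\<Sum>i\<in>S. z$i) = real (card S) - s * F s"
    proof -
      have "(\<Sum>i\<in>S. z$i) = (\<Sum>i\<in>S. 1 - s * (Psi$i$i / ((bs$i)^2 + s * Psi$i$i)))"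
      proof (rule sum.cong[OF refl])
        fix i assume iS: "i \<in> S"
        have pos: "(bs$i)^2 + s * Psi$i$i > 0" using bsS[OF iS] s0 psd_diag[OF PsiP, of i]
          by (smt (verit) mult_nonneg_nonneg zero_less_power2)
        show "z$i = 1 - s * (Psi$i$i / ((bs$i)^2 + s * Psi$i$i))"
          using pos by (simp add: z_def Bii bS[OF iS] field_simps)
      qed
      also have "\<dots> = real (card S) - s * F s"
        by (simp add: sum_subtractf F_def sum_distrib_left)
      finally show ?thesis .
    qed
    have zN: "(\<Sum>i\<in>-S. z$i) \<le> s * t^2 * q"
    proof -
      have "(\<Sum>i\<in>-S. z$i) \<le> (\<Sum>i\<in>-S. s * t^2 * (Psi$i$i * (c i)^2))"
      proof (rule sum_mono)
        fix i assume "i \<in> -S"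
        hence iN: "i \<notin> S" by simp
        show "z$i \<le> s * t^2 * (Psi$i$i * (c i)^2)"
        proof (cases "Psi$i$i = 0")
          case True thus ?thesis by (simp add: z_def Bii bN[OF iN])
        next
          case False
          hence Pp: "Psi$i$i > 0" using psd_diag[OF PsiP, of i] by simp
          have "z$i = (b$i)^2 / ((b$i)^2 + s * Psi$i$i)" by (simp add: z_def Bii)
          also have "\<dots> \<le> (b$i)^2 / (s * Psi$i$i)"
          proof (rule divide_left_mono)
            have sp: "0 < s * Psi$i$i" using Pp s0 by simp
            show "s * Psi$i$i \<le> (b$i)^2 + s * Psi$i$i" by simp
            show "0 \<le> (b$i)^2" by simp
            have "0 < (b$i)^2 + s * Psi$i$i" using sp by (simp add: add_nonneg_pos)
            thus "0 < ((b$i)^2 + s * Psi$i$i) * (s * Psi$i$i)" using sp by simp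
          qed
          also have "\<dots> = s * t^2 * (Psi$i$i * (c i)^2)"
            using Pp s0 by (simp add: bN[OF iN] power2_eq_square field_simps)
          finally show ?thesis .
        qed
      qed
      also have "\<dots> = s * t^2 * q" by (simp add: q_def sum_distrib_left)
      finally show ?thesis .
    qed
    have "(\<Sum>i\<in>UNIV. z$i) = (\<Sum>i\<in>S. z$i) + (\<Sum>i\<in>-S. z$i)" by (rule sum_split_S)
    also have "\<dots> \<le> real (card S) - s * F s + s * t^2 * q" using zS zN by simp
    also have "\<dots> \<le> real (card S)" using sF s0 by (simp add: algebra_simps mult_left_mono)
    finally show "(\<Sum>i\<in>UNIV. z $ i) \<le> real k" using card by simp
  qed
  have gv: "g \<bullet> v = - q"
  proof -
    have "g \<bullet> v = (\<Sum>i\<in>UNIV. g$i * v$i)" by (simp add: inner_vec_def)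
    also have "\<dots> = (\<Sum>i\<in>S. g$i * v$i) + (\<Sum>i\<in>-S. g$i * v$i)" by (rule sum_split_S)
    also have "(\<Sum>i\<in>S. g$i * v$i) = 0" by (simp add: v_def)
    also have "(\<Sum>i\<in>-S. g$i * v$i) = (\<Sum>i\<in>-S. - (Psi$i$i * (c i)^2))"
      by (rule sum.cong) (auto simp: v_def g_out power2_eq_square)
    finally show ?thesis by (simp add: q_def sum_negf)
  qed
  have "2 * sdp_obj X y \<rho> b B = h b + s * (\<rho> * a)"
    unfolding E2 by (simp add: B_def a_def G_A0)
  also have "h b = h bs + 2 * (s * t) * (g \<bullet> v) + (s * t)^2 * K"
    unfolding b_def E1v by (simp add: K_def matrix_vector_mult_scaleR power2_eq_square)
  finally have "2 * sdp_obj X y \<rho> b B = h bs + s * (\<rho> * a - 2 * t * q + s * (t^2 * K))"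
    by (simp add: gv power2_eq_square algebra_simps)
  moreover have "s * (\<rho> * a - 2 * t * q + s * (t^2 * K)) < 0" using s0 sO by (simp add: mult_pos_neg)
  ultimately have "2 * sdp_obj X y \<rho> b B < h bs" by linarith
  moreover have "sdp_obj X y \<rho> bs (outer bs bs) \<le> sdp_obj X y \<rho> b B" using opt feas by blast
  ultimately show False using cand_obj by linarith
qed

lemma N1:
  assumes card: "card S = k" and opt: "\<forall>b B z. sdp_feasible k b B z \<longrightarrow> sdp_obj X y \<rho> bs (outer bs bs) \<le> sdp_obj X y \<rho> b B"
    and j0: "j0 \<notin> S" "c j0 \<noteq> 0" and i0: "i0 \<in> S" "c i0 = 0"
  shows False
proof -
  have Gp: "G$j0$j0 > 0" using G_diag[of j0] rho by linarith
  define t where "t = c j0 / G$j0$j0"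
  define b where "b = bs + t *\<^sub>R axis j0 1"
  define z :: "real^'p" where "z = (\<chi> i. if i = j0 then 1 else if i = i0 then 0 else indicator_vec S $ i)"
  have ij: "i0 \<noteq> j0" using i0 j0 by auto
  have bi0: "bs$i0 = 0" using c_in[OF i0(1)] i0(2) rho by simp
  have "sdp_feasible k b (outer b b) z"
    unfolding sdp_feasible_def
  proof (intro conjI allI)
    show "symmetric_mat (outer b b)" by (simp add: symmetric_mat_def transpose_outer)
    show "psd (block_mat 1 b (outer b b))" using block_psd_intro[OF psd_zero, of b] by simp
    fix i
    show "psd (mat22 (z $ i) (b $ i) (b $ i) (outer b b $ i $ i))"
      unfolding mat22_psd_iff
      using ij bi0 bs_out by (auto simp: z_def b_def outer_def axis_def indicator_vec_def power2_eq_square)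
  next
    have "(\<Sum>i\<in>UNIV. z$i) = (\<Sum>i\<in>UNIV. indicator_vec S $ i + (if i = j0 then 1 else 0) - (if i = i0 then 1 else 0))"
      by (rule sum.cong) (use ij i0 j0 in \<open>auto simp: z_def indicator_vec_def\<close>)
    also have "\<dots> = (\<Sum>i\<in>UNIV. indicator_vec S $ i)"
      by (simp add: sum_subtractf sum.distrib)
    also have "\<dots> = real (card S)" by (simp add: indicator_vec_def sum.If_cases)
    finally show "(\<Sum>i\<in>UNIV. z $ i) \<le> real k" using card by simp
  qed
  hence "sdp_obj X y \<rho> bs (outer bs bs) \<le> sdp_obj X y \<rho> b (outer b b)" using opt by blast
  hence "h bs \<le> h b" using E2[of b "outer b b"] cand_obj by simp
  also have "h b = h bs + 2 * t * g$j0 + t^2 * G$j0$j0"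
    unfolding b_def E1v by (simp add: inner_axis ax1 ax2 column_def power2_eq_square algebra_simps)
  also have "\<dots> = h bs - (c j0)^2 / G$j0$j0"
    using Gp g_out[OF j0(1)] by (simp add: t_def power2_eq_square field_simps)
  finally have "(c j0)^2 / G$j0$j0 \<le> 0" by simp
  moreover have "(c j0)^2 / G$j0$j0 > 0" using j0 Gp by simp
  ultimately show False by simp
qed

end


lemma realC: fixes u v l1 l2 d1 d2 C :: real
  assumes "0 \<le> u" "0 \<le> v" "u + v = 1" "0 \<le> l1" "0 \<le> l2" "0 \<le> d1" "0 \<le> d2" "0 \<le> C"
    "C \<le> l1 * d1" "C \<le> l2 * d2"
  shows "C \<le> (u * l1 + v * l2) * (u * d1 + v * d2)"
proof -
  have h1: "(l1 * d2 + l2 * d1)^2 \<ge> 4 * C^2"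
  proof -
    have "(l1 * d2 + l2 * d1)^2 = (l1 * d2 - l2 * d1)^2 + 4 * ((l1 * d1) * (l2 * d2))"
      by (simp add: power2_eq_square algebra_simps)
    moreover have "(l1 * d1) * (l2 * d2) \<ge> C * C" using assms by (intro mult_mono) auto
    ultimately show ?thesis by (simp add: power2_eq_square) (smt (verit) zero_le_square)
  qed
  have h2: "l1 * d2 + l2 * d1 \<ge> 2 * C"
  proof -
    have "(2 * C)^2 \<le> (l1 * d2 + l2 * d1)^2" using h1 by (simp add: power2_eq_square)
    moreover have "0 \<le> l1 * d2 + l2 * d1" using assms by simp
    ultimately show ?thesis by (rule power2_le_imp_le)
  qed
  have "(u * l1 + v * l2) * (u * d1 + v * d2) = u^2 * (l1 * d1) + v^2 * (l2 * d2) + u * v * (l1 * d2 + l2 * d1)"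
    by (simp add: power2_eq_square algebra_simps)
  also have "\<dots> \<ge> u^2 * C + v^2 * C + u * v * (2 * C)"
    using assms h2 by (intro add_mono mult_left_mono) auto
  also have "u^2 * C + v^2 * C + u * v * (2 * C) = (u + v)^2 * C" by (simp add: power2_eq_square algebra_simps)
  finally show ?thesis using assms by simp
qed

lemma diag_mat_add: "diag_mat (x + y) = diag_mat x + diag_mat y"
  by (simp add: diag_mat_def vec_eq_iff)
lemma diag_mat_scale: "diag_mat (c *\<^sub>R x) = c *\<^sub>R diag_mat x"
  by (simp add: diag_mat_def vec_eq_iff)
lemma linear_diag: "linear diag_mat"
  by (rule linearI) (simp_all add: diag_mat_add diag_mat_scale)

lemma cont_ij: "continuous_on UNIV (\<lambda>P::real^'n^'m. P$i$j)"
proof -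
  have "bounded_linear (\<lambda>P::real^'n^'m. P$i$j)"
    using bounded_linear_compose[OF bounded_linear_vec_nth[of j] bounded_linear_vec_nth[of i]] by simp
  thus ?thesis by (rule linear_continuous_on)
qed

lemma cont_i: "continuous_on UNIV (\<lambda>P::real^'n. P$i)"
  by (rule linear_continuous_on) (rule bounded_linear_vec_nth)

lemma closed_psd: "closed {P::real^'n^'n. psd P}"
proof -
  have "{P::real^'n^'n. psd P} = {P. \<forall>i. \<forall>j. P$i$j = P$j$i} \<inter> {P. \<forall>x. 0 \<le> (\<Sum>i\<in>UNIV. \<Sum>j\<in>UNIV. x$i * P$i$j * x$j)}"
    unfolding psd_def qf_sum by (auto simp: transpose_def vec_eq_iff)
  also have "closed \<dots>"
    by (intro closed_Int closed_Collect_all closed_Collect_eq closed_Collect_le continuous_on_sum continuous_on_mult continuous_on_const cont_ij)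
  finally show ?thesis .
qed

lemma psd_diag_sub: "psd (M - diag_mat d) \<Longrightarrow> d$i \<le> M$i$i"
  using psd_diag[of "M - diag_mat d" i] by (simp add: diag_mat_def)


context rsetup
begin

definition "Tset = {d::real^'p. (\<forall>i. 0 \<le> d$i) \<and> (\<exists>lam\<ge>0. (\<forall>i\<in>S. lam = d$i * (c i)^2) \<and> (\<forall>i. i \<notin> S \<longrightarrow> (c i)^2 \<le> lam * d$i))}"
definition "Kset = {M. \<exists>d\<in>Tset. psd (M - diag_mat d)}"

lemma Tset_convex: "convex Tset"
  unfolding convex_def
proof (intro ballI allI impI)
  fix x y :: "real^'p" and u v :: real
  assume x: "x \<in> Tset" and y: "y \<in> Tset" and uv: "0 \<le> u" "0 \<le> v" "u + v = 1"
  obtain l1 where l1: "l1 \<ge> 0" "\<forall>i\<in>S. l1 = x$i * (c i)^2" "\<forall>i. i \<notin> S \<longrightarrow> (c i)^2 \<le> l1 * x$i" and x0: "\<forall>i. 0 \<le> x$i"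
    using x unfolding Tset_def by blast
  obtain l2 where l2: "l2 \<ge> 0" "\<forall>i\<in>S. l2 = y$i * (c i)^2" "\<forall>i. i \<notin> S \<longrightarrow> (c i)^2 \<le> l2 * y$i" and y0: "\<forall>i. 0 \<le> y$i"
    using y unfolding Tset_def by blast
  show "u *\<^sub>R x + v *\<^sub>R y \<in> Tset"
    unfolding Tset_def
  proof (intro CollectI conjI allI exI[of _ "u * l1 + v * l2"])
    fix i show "0 \<le> (u *\<^sub>R x + v *\<^sub>R y)$i" using uv x0 y0 by simp
  next
    show "0 \<le> u * l1 + v * l2" using uv l1 l2 by simp
  next
    show "\<forall>i\<in>S. u * l1 + v * l2 = (u *\<^sub>R x + v *\<^sub>R y) $ i * (c i)^2"
      using l1(2) l2(2) by (simp add: algebra_simps)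
  next
    fix i show "i \<notin> S \<longrightarrow> (c i)^2 \<le> (u * l1 + v * l2) * (u *\<^sub>R x + v *\<^sub>R y) $ i"
      using realC[of u v l1 l2 "x$i" "y$i" "(c i)^2"] uv l1 l2 x0 y0 by (auto simp: mult.commute)
  qed
qed

lemma Kset_convex: "convex Kset"
  unfolding convex_def
proof (intro ballI allI impI)
  fix x y :: "real^'p^'p" and u v :: real
  assume x: "x \<in> Kset" and y: "y \<in> Kset" and uv: "0 \<le> u" "0 \<le> v" "u + v = 1"
  obtain d1 where d1: "d1 \<in> Tset" "psd (x - diag_mat d1)" using x unfolding Kset_def by blast
  obtain d2 where d2: "d2 \<in> Tset" "psd (y - diag_mat d2)" using y unfolding Kset_def by blast
  have "u *\<^sub>R d1 + v *\<^sub>R d2 \<in> Tset" using Tset_convex d1 d2 uv unfolding convex_def by blast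
  moreover have "psd (u *\<^sub>R x + v *\<^sub>R y - diag_mat (u *\<^sub>R d1 + v *\<^sub>R d2))"
  proof -
    have "u *\<^sub>R x + v *\<^sub>R y - diag_mat (u *\<^sub>R d1 + v *\<^sub>R d2) = u *\<^sub>R (x - diag_mat d1) + v *\<^sub>R (y - diag_mat d2)"
      by (simp add: diag_mat_add diag_mat_scale algebra_simps)
    thus ?thesis using psd_add psd_scale d1 d2 uv by metis
  qed
  ultimately show "u *\<^sub>R x + v *\<^sub>R y \<in> Kset" unfolding Kset_def by blast
qed

lemma Tset_closed: assumes i0: "i0 \<in> S" and hS: "\<forall>i\<in>S. c i \<noteq> 0" shows "closed Tset"
proof -
  have "Tset = {d. \<forall>i. 0 \<le> d$i} \<inter> {d. \<forall>i. (if i \<in> S then d$i0 * (c i0)^2 = d$i * (c i)^2 else (c i)^2 \<le> d$i0 * (c i0)^2 * d$i)}"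
  proof (intro set_eqI iffI)
    fix d assume "d \<in> Tset"
    then obtain lam where "\<forall>i. 0 \<le> d$i" "lam \<ge> 0" "\<forall>i\<in>S. lam = d$i * (c i)^2" "\<forall>i. i \<notin> S \<longrightarrow> (c i)^2 \<le> lam * d$i"
      unfolding Tset_def by blast
    moreover hence "lam = d$i0 * (c i0)^2" using i0 by blast
    ultimately show "d \<in> {d. \<forall>i. 0 \<le> d$i} \<inter> {d. \<forall>i. (if i \<in> S then d$i0 * (c i0)^2 = d$i * (c i)^2 else (c i)^2 \<le> d$i0 * (c i0)^2 * d$i)}"
      by auto
  next
    fix d assume "d \<in> {d. \<forall>i. 0 \<le> d$i} \<inter> {d. \<forall>i. (if i \<in> S then d$i0 * (c i0)^2 = d$i * (c i)^2 else (c i)^2 \<le> d$i0 * (c i0)^2 * d$i)}"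
    hence A: "\<forall>i. 0 \<le> d$i" and B: "\<And>i. (if i \<in> S then d$i0 * (c i0)^2 = d$i * (c i)^2 else (c i)^2 \<le> d$i0 * (c i0)^2 * d$i)" by auto
    show "d \<in> Tset" unfolding Tset_def
    proof (intro CollectI conjI exI[of _ "d$i0 * (c i0)^2"])
      show "\<forall>i. 0 \<le> d$i" by (rule A)
      show "0 \<le> d$i0 * (c i0)^2" using A by simp
      show "\<forall>i\<in>S. d$i0 * (c i0)^2 = d$i * (c i)^2" using B by (metis (full_types))
      show "\<forall>i. i \<notin> S \<longrightarrow> (c i)^2 \<le> d$i0 * (c i0)^2 * d$i" using B by (metis (full_types))
    qed
  qed
  also have "closed \<dots>"
  proof (intro closed_Int closed_Collect_all)
    fix i
    show "closed {d::real^'p. 0 \<le> d$i}" by (intro closed_Collect_le continuous_on_const cont_i)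
    show "closed {d::real^'p. if i \<in> S then d$i0 * (c i0)^2 = d$i * (c i)^2 else (c i)^2 \<le> d$i0 * (c i0)^2 * d$i}"
      by (cases "i \<in> S") (simp_all, (intro closed_Collect_le closed_Collect_eq continuous_on_const continuous_on_mult cont_i)+)
  qed
  finally show ?thesis .
qed

lemma Kset_closed: assumes i0: "i0 \<in> S" and hS: "\<forall>i\<in>S. c i \<noteq> 0" shows "closed Kset"
  unfolding closed_sequential_limits
proof (intro allI impI, elim conjE)
  fix xs :: "nat \<Rightarrow> real^'p^'p" and l
  assume xs: "\<forall>n. xs n \<in> Kset" and lim: "xs \<longlonglongrightarrow> l"
  define R where "R = norm l + 1"
  define C where "C = (\<Union>x\<in>{P. psd P}. \<Union>y\<in>diag_mat ` (Tset \<inter> cbox 0 (\<chi> i. R)). {x + y})"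
  have "compact (diag_mat ` (Tset \<inter> cbox 0 (\<chi> i. R)))"
  proof (rule compact_continuous_image)
    show "continuous_on (Tset \<inter> cbox 0 (\<chi> i. R)) diag_mat"
      using linear_continuous_on[OF linear_conv_bounded_linear[THEN iffD1, OF linear_diag], of UNIV]
      by (rule continuous_on_subset) simp
    show "compact (Tset \<inter> cbox 0 (\<chi> i. R))" using Tset_closed[OF i0 hS] by (intro closed_Int_compact) auto
  qed
  hence Cc: "closed C" unfolding C_def by (intro closed_compact_sums closed_psd)
  have "\<forall>\<^sub>F n in sequentially. norm (xs n) < R"
    using tendsto_norm[OF lim] unfolding R_def by (rule order_tendstoD) simp
  hence "\<forall>\<^sub>F n in sequentially. xs n \<in> C"
  proof (rule eventually_mono)
    fix n assume nR: "norm (xs n) < R"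
    obtain d where d: "d \<in> Tset" "psd (xs n - diag_mat d)" using xs unfolding Kset_def by blast
    have "d \<in> cbox 0 (\<chi> i. R)"
      unfolding mem_box_cart
    proof
      fix i
      have "0 \<le> d$i" using d(1) unfolding Tset_def by blast
      moreover have "d$i \<le> xs n $ i $ i" by (rule psd_diag_sub[OF d(2)])
      moreover have "xs n $ i $ i \<le> norm (xs n)"
        using component_le_norm_cart[of "xs n $ i" i] Finite_Cartesian_Product.norm_nth_le[of "xs n" i] by linarith
      ultimately show "0 $ i \<le> d $ i \<and> d $ i \<le> (\<chi> i. R) $ i" using nR by simp
    qed
    hence "xs n = (xs n - diag_mat d) + diag_mat d \<and> xs n - diag_mat d \<in> {P. psd P} \<and> diag_mat d \<in> diag_mat ` (Tset \<inter> cbox 0 (\<chi> i. R))"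
      using d by auto
    thus "xs n \<in> C" unfolding C_def by blast
  qed
  hence "l \<in> C" using Lim_in_closed_set[OF Cc _ _ lim] by simp
  then obtain P d where "psd P" "d \<in> Tset" "l = P + diag_mat d" unfolding C_def by blast
  thus "l \<in> Kset" unfolding Kset_def by (intro CollectI bexI[of _ d]) auto
qed

end



lemma inner_transpose: "(transpose P :: real^'n^'n) \<bullet> M = P \<bullet> transpose M"
proof -
  have "(transpose P :: real^'n^'n) \<bullet> M = (\<Sum>i\<in>UNIV. \<Sum>j\<in>UNIV. P$j$i * M$i$j)"
    by (simp add: inner_mat transpose_def)
  also have "\<dots> = (\<Sum>j\<in>UNIV. \<Sum>i\<in>UNIV. P$j$i * M$i$j)" by (rule sum.swap)
  finally show ?thesis by (simp add: inner_mat transpose_def)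
qed

lemma sym_part: assumes "transpose M = M"
  shows "((1/2) *\<^sub>R (P + transpose P)) \<bullet> (M::real^'n^'n) = P \<bullet> M"
  using assms by (simp add: inner_add_left inner_transpose)

lemma mat1_inner: "mat 1 \<bullet> (P::real^'n^'n) = (\<Sum>i\<in>UNIV. P$i$i)"
proof -
  have "\<And>i. (\<Sum>j\<in>UNIV. mat 1 $i$j * P$i$j) = (\<Sum>j\<in>UNIV. if j = i then P$i$i else 0)"
    by (rule sum.cong) (auto simp: mat_def)
  thus ?thesis by (simp add: inner_mat)
qed

context rsetup
begin

lemma psd_XtX: "psd (inverse \<rho> *\<^sub>R (transpose X ** X))"
  unfolding psd_def
proof (intro conjI allI)
  show "transpose (inverse \<rho> *\<^sub>R (transpose X ** X)) = inverse \<rho> *\<^sub>R (transpose X ** X)"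
    by (simp add: transpose_def vec_eq_iff matrix_matrix_mult_def mult.commute)
  fix x :: "real^'p"
  have "x \<bullet> ((transpose X ** X) *v x) = (X *v x) \<bullet> (X *v x)"
    by (metis dot_lmul_matrix inner_commute matrix_vector_mul_assoc transpose_matrix_vector)
  hence "0 \<le> x \<bullet> ((transpose X ** X) *v x)" by simp
  thus "0 \<le> x \<bullet> ((inverse \<rho> *\<^sub>R (transpose X ** X)) *v x)"
    using rho by (simp add: scaleR_matrix_vector_assoc[symmetric])
qed

lemma trace_bound: "psd Psi \<Longrightarrow> (\<Sum>i\<in>UNIV. Psi$i$i) \<le> A0 \<bullet> Psi"
  using psd_inner_nonneg[OF psd_XtX, of Psi] by (simp add: A0_def inner_add_left mat1_inner)

lemma A0_sym: "transpose A0 = A0" using psd_A0 unfolding psd_def by blast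

lemma choose_d:
  assumes hS: "\<forall>i\<in>S. c i \<noteq> 0" and PsiP: "psd Psi"
    and kq: "4 * (\<Sum>i\<in>S. Psi$i$i / (c i)^2) * (\<Sum>i\<in>-S. Psi$i$i * (c i)^2) \<le> (A0 \<bullet> Psi)^2"
  shows "\<exists>d\<in>Tset. diag_mat d \<bullet> Psi \<le> A0 \<bullet> Psi"
proof -
  define a where "a = A0 \<bullet> Psi"
  define p where "p = (\<Sum>i\<in>S. Psi$i$i / (c i)^2)"
  define q where "q = (\<Sum>i\<in>-S. Psi$i$i * (c i)^2)"
  have kq': "4 * p * q \<le> a^2" using kq by (simp add: a_def p_def q_def)
  have Pd: "\<And>i. 0 \<le> Psi$i$i" using psd_diag[OF PsiP] .
  have p0: "0 \<le> p" unfolding p_def using Pd by (simp add: sum_nonneg)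
  have q0: "0 \<le> q" unfolding q_def using Pd by (simp add: sum_nonneg)
  have tb: "(\<Sum>i\<in>UNIV. Psi$i$i) \<le> a" unfolding a_def by (rule trace_bound[OF PsiP])
  define dl where "dl = (\<lambda>lam. (\<chi> i. if i \<in> S then lam / (c i)^2 else (c i)^2 / lam) :: real^'p)"
  have inT: "dl lam \<in> Tset" if l: "lam > 0" for lam
    unfolding Tset_def
  proof (intro CollectI conjI exI[of _ lam])
    show "\<forall>i. 0 \<le> dl lam $ i" using l by (simp add: dl_def)
    show "0 \<le> lam" using l by simp
    show "\<forall>i\<in>S. lam = dl lam $ i * (c i)^2" using hS by (simp add: dl_def)
    show "\<forall>i. i \<notin> S \<longrightarrow> (c i)^2 \<le> lam * dl lam $ i" using l by (simp add: dl_def)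
  qed
  have val: "diag_mat (dl lam) \<bullet> Psi = lam * p + q / lam" if l: "lam > 0" for lam
  proof -
    have "diag_mat (dl lam) \<bullet> Psi = (\<Sum>i\<in>UNIV. dl lam $ i * Psi$i$i)" by (rule diag_inner)
    also have "\<dots> = (\<Sum>i\<in>S. dl lam $ i * Psi$i$i) + (\<Sum>i\<in>-S. dl lam $ i * Psi$i$i)" by (rule sum_split_S)
    also have "(\<Sum>i\<in>S. dl lam $ i * Psi$i$i) = lam * p"
      unfolding p_def sum_distrib_left by (rule sum.cong) (auto simp: dl_def)
    also have "(\<Sum>i\<in>-S. dl lam $ i * Psi$i$i) = q / lam"
      unfolding q_def sum_divide_distrib by (rule sum.cong) (auto simp: dl_def)
    finally show ?thesis .
  qed
  show ?thesis
  proof (cases "a = 0")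
    case True
    hence "(\<Sum>i\<in>UNIV. Psi$i$i) \<le> 0" using tb by simp
    moreover have "0 \<le> (\<Sum>i\<in>UNIV. Psi$i$i)" using Pd by (simp add: sum_nonneg)
    ultimately have "(\<Sum>i\<in>UNIV. Psi$i$i) = 0" by linarith
    hence "\<forall>i\<in>UNIV. Psi$i$i = 0" using Pd by (subst sum_nonneg_eq_0_iff[symmetric]) auto
    hence "q = 0" "p = 0" by (simp_all add: p_def q_def)
    thus ?thesis using inT[of 1] val[of 1] True by (intro bexI[of _ "dl 1"]) (auto simp: a_def)
  next
    case False
    hence ap: "a > 0" using psd_inner_nonneg[OF psd_A0 PsiP] by (simp add: a_def)
    show ?thesis
    proof (cases "p = 0")
      case True
      define lam where "lam = (q + 1) / a"
      have lp: "lam > 0" using ap q0 by (simp add: lam_def)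
      have "lam * p + q / lam = q * a / (q + 1)" using True ap q0 by (simp add: lam_def)
      also have "\<dots> \<le> a" using ap q0 by (simp add: field_simps)
      finally show ?thesis using inT[OF lp] val[OF lp] by (intro bexI[of _ "dl lam"]) (auto simp: a_def)
    next
      case False
      hence pp: "p > 0" using p0 by simp
      define lam where "lam = a / (2 * p)"
      have lp: "lam > 0" using ap pp by (simp add: lam_def)
      have "lam * p + q / lam = a / 2 + 2 * p * q / a" using ap pp by (simp add: lam_def field_simps)
      also have "\<dots> \<le> a"
      proof -
        have "2 * p * q / a \<le> a / 2" using kq' ap by (simp add: field_simps power2_eq_square)
        thus ?thesis by simp
      qed
      finally show ?thesis using inT[OF lp] val[OF lp] by (intro bexI[of _ "dl lam"]) (auto simp: a_def)
    qed
  qed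
qed

lemma A0_in_K:
  assumes card: "card S = k" and opt: "\<forall>b B z. sdp_feasible k b B z \<longrightarrow> sdp_obj X y \<rho> bs (outer bs bs) \<le> sdp_obj X y \<rho> b B"
    and hS: "\<forall>i\<in>S. c i \<noteq> 0" and i0: "i0 \<in> S"
  shows "A0 \<in> Kset"
proof (rule ccontr)
  assume nK: "A0 \<notin> Kset"
  obtain Psi bb where sep1: "Psi \<bullet> A0 < bb" and sep2: "\<forall>x\<in>Kset. bb < Psi \<bullet> x"
    using separating_hyperplane_closed_point[OF Kset_convex Kset_closed[OF i0 hS] nK] by blast
  define d1 :: "real^'p" where "d1 = (\<chi> i. if i \<in> S then 1 / (c i)^2 else (c i)^2)"
  have d1T: "d1 \<in> Tset" unfolding Tset_def
    by (intro CollectI conjI allI exI[of _ 1]) (use hS in \<open>auto simp: d1_def\<close>)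
  have nonneg: "0 \<le> Psi \<bullet> outer v v" for v
  proof (rule ccontr)
    assume neg: "\<not> 0 \<le> Psi \<bullet> outer v v"
    define t where "t = (\<bar>Psi \<bullet> diag_mat d1\<bar> + \<bar>bb\<bar> + 1) / (- (Psi \<bullet> outer v v))"
    have t0: "t \<ge> 0" unfolding t_def by (rule divide_nonneg_pos) (use neg in auto)
    have "diag_mat d1 + t *\<^sub>R outer v v \<in> Kset"
      unfolding Kset_def using d1T psd_scale[OF t0 psd_outer] by (intro CollectI bexI[of _ d1]) auto
    hence "bb < Psi \<bullet> (diag_mat d1 + t *\<^sub>R outer v v)" using sep2 by blast
    hence "bb < Psi \<bullet> diag_mat d1 + t * (Psi \<bullet> outer v v)" by (simp add: inner_add_right)
    moreover have "t * (Psi \<bullet> outer v v) = - (\<bar>Psi \<bullet> diag_mat d1\<bar> + \<bar>bb\<bar> + 1)"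
      using neg by (simp add: t_def)
    ultimately show False by linarith
  qed
  define Ps where "Ps = (1/2) *\<^sub>R (Psi + transpose Psi)"
  have PsP: "psd Ps"
    unfolding psd_def
  proof (intro conjI allI)
    show "transpose Ps = Ps" by (simp add: Ps_def transpose_def vec_eq_iff)
    fix v :: "real^'p"
    have "v \<bullet> (Ps *v v) = Ps \<bullet> outer v v" by (simp add: inner_outer)
    also have "\<dots> = Psi \<bullet> outer v v" unfolding Ps_def by (rule sym_part[OF transpose_outer])
    finally show "0 \<le> v \<bullet> (Ps *v v)" using nonneg by simp
  qed
  have eqA: "Ps \<bullet> A0 = Psi \<bullet> A0" unfolding Ps_def by (rule sym_part[OF A0_sym])
  have "4 * (\<Sum>i\<in>S. Ps$i$i / (c i)^2) * (\<Sum>i\<in>-S. Ps$i$i * (c i)^2) \<le> (A0 \<bullet> Ps)^2"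
    by (rule key[OF card opt hS PsP])
  then obtain d where dT: "d \<in> Tset" and dle: "diag_mat d \<bullet> Ps \<le> A0 \<bullet> Ps"
    using choose_d[OF hS PsP] by blast
  have "diag_mat d \<in> Kset" unfolding Kset_def using dT psd_zero by (intro CollectI bexI[of _ d]) auto
  hence "bb < Psi \<bullet> diag_mat d" using sep2 by blast
  also have "Psi \<bullet> diag_mat d = Ps \<bullet> diag_mat d"
    unfolding Ps_def by (rule sym_part[symmetric]) (simp add: diag_mat_def transpose_def vec_eq_iff)
  also have "\<dots> \<le> Ps \<bullet> A0" using dle by (simp add: inner_commute)
  also have "\<dots> = Psi \<bullet> A0" by (rule eqA)
  finally show False using sep1 by simp
qed

lemma necessity:
  assumes card: "card S = k" and kp: "k > 0"
    and opt: "\<forall>b B z. sdp_feasible k b B z \<longrightarrow> sdp_obj X y \<rho> bs (outer bs bs) \<le> sdp_obj X y \<rho> b B"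
  shows "\<exists>d :: real^'p. \<exists>lam :: real. (\<forall>i. d $ i \<ge> 0) \<and> lam \<ge> 0 \<and> psd (A0 - diag_mat d) \<and>
       (\<forall>i\<in>S. lam = d $ i * (c i)^2) \<and> (\<forall>i. i \<notin> S \<longrightarrow> lam * d $ i \<ge> (c i)^2)"
proof (cases "\<forall>j. j \<notin> S \<longrightarrow> c j = 0")
  case True
  have "diag_mat (0::real^'p) = 0" by (simp add: diag_mat_def vec_eq_iff)
  hence "psd (A0 - diag_mat 0)" using psd_A0 by simp
  thus ?thesis using True by (intro exI[of _ 0]) auto
next
  case False
  then obtain j0 where j0: "j0 \<notin> S" "c j0 \<noteq> 0" by blast
  obtain i0 where i0: "i0 \<in> S" using card kp by (metis card.empty ex_in_conv less_irrefl)
  have hS: "\<forall>i\<in>S. c i \<noteq> 0" using N1[OF card opt j0] by blast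
  have "A0 \<in> Kset" by (rule A0_in_K[OF card opt hS i0])
  then obtain d where "d \<in> Tset" "psd (A0 - diag_mat d)" unfolding Kset_def by blast
  thus ?thesis unfolding Tset_def by (auto simp: mult.commute)
qed

end

theorem theorem2:
  fixes X :: "real^'p^'n" and y :: "real^'n" and \<rho> :: real and k :: nat
    and S :: "'p set" and bstar :: "real^'p"
  assumes "\<rho> > 0" and "k > 0" and "card S = k"
    and "is_restricted_ridge_min X y \<rho> S bstar"
  shows "sdp_optimal X y \<rho> k bstar (outer bstar bstar) (indicator_vec S) \<longleftrightarrow>
    (\<exists>d :: real^'p. \<exists>lam :: real. (\<forall>i. d $ i \<ge> 0) \<and> lam \<ge> 0 \<and>
       psd (inverse \<rho> *\<^sub>R (transpose X ** X) + mat 1 - diag_mat d) \<and>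
       (\<forall>i\<in>S. lam = d $ i * (column i X \<bullet> (Mmat X \<rho> S *v y))\<^sup>2) \<and>
       (\<forall>i. i \<notin> S \<longrightarrow> lam * d $ i \<ge> (column i X \<bullet> (Mmat X \<rho> S *v y))\<^sup>2))"
proof -
  interpret R: rsetup X y \<rho> S bstar using assms by unfold_locales auto
  have ceq: "\<And>i. column i X \<bullet> (Mmat X \<rho> S *v y) = R.c i" by (rule R.c_eq)
  have A0eq: "inverse \<rho> *\<^sub>R (transpose X ** X) + mat 1 = R.A0" by (simp add: R.A0_def)
  show ?thesis
    unfolding ceq A0eq sdp_optimal_def
  proof
    assume "sdp_feasible k bstar (outer bstar bstar) (indicator_vec S) \<and>
      (\<forall>b' B' z'. sdp_feasible k b' B' z' \<longrightarrow> sdp_obj X y \<rho> bstar (outer bstar bstar) \<le> sdp_obj X y \<rho> b' B')"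
    hence opt: "\<forall>b B z. sdp_feasible k b B z \<longrightarrow> sdp_obj X y \<rho> bstar (outer bstar bstar) \<le> sdp_obj X y \<rho> b B" by blast
    show "\<exists>d lam. (\<forall>i. 0 \<le> d $ i) \<and> 0 \<le> lam \<and> psd (R.A0 - diag_mat d) \<and>
       (\<forall>i\<in>S. lam = d $ i * (R.c i)\<^sup>2) \<and> (\<forall>i. i \<notin> S \<longrightarrow> (R.c i)\<^sup>2 \<le> lam * d $ i)"
      by (rule R.necessity[OF assms(3) assms(2) opt])
  next
    assume "\<exists>d lam. (\<forall>i. 0 \<le> d $ i) \<and> 0 \<le> lam \<and> psd (R.A0 - diag_mat d) \<and>
       (\<forall>i\<in>S. lam = d $ i * (R.c i)\<^sup>2) \<and> (\<forall>i. i \<notin> S \<longrightarrow> (R.c i)\<^sup>2 \<le> lam * d $ i)"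
    then obtain d lam where H: "\<forall>i. 0 \<le> d $ i" "0 \<le> lam" "psd (R.A0 - diag_mat d)"
       "\<forall>i\<in>S. lam = d $ i * (R.c i)\<^sup>2" "\<forall>i. i \<notin> S \<longrightarrow> (R.c i)\<^sup>2 \<le> lam * d $ i" by blast
    show "sdp_feasible k bstar (outer bstar bstar) (indicator_vec S) \<and>
      (\<forall>b' B' z'. sdp_feasible k b' B' z' \<longrightarrow> sdp_obj X y \<rho> bstar (outer bstar bstar) \<le> sdp_obj X y \<rho> b' B')"
      using R.cand_feasible[OF assms(3)] R.sufficiency[OF assms(3) H] by blast
  qed
qed


end
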